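(* Let $G$ be a finite group, let $\pi$ be a set of primes and let $q\in\pi$. Let $\mathcal{S}_{q'}(G_\pi)$ denote the union of all conjugacy classes $g^G$ with $g$ a $\pi$-element of $G$ such that $|g^G|$ is not divisible by $q$. Then $|\mathbf{Z}(G)|_q$ divides $|\mathcal{S}_{q'}(G_\pi)|_q$. Moreover, if $|\mathbf{Z}(G)|_q=|\mathcal{S}_{q'}(G_\pi)|_q$, then $\mathbf{Z}(Q)\le \mathbf{Z}(G)$, where $Q$ is a Sylow $q$-subgroup of $G$.
   Context: A $\pi$-element is an element whose order is divisible only by primes in $\pi$. For a positive integer $n$ and prime $q$, $n_q$ denotes the largest power of $q$ dividing $n$. $|g^G|=|G:C_G(g)|$ is the size of the conjugacy class of $g$; $\mathbf{Z}(\cdot)$ denotes the centre. *)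

theory Defs
  imports "HOL-Algebra.Algebra" "HOL-Computational_Algebra.Primes"
begin

definition ppart :: "nat \<Rightarrow> nat \<Rightarrow> nat" where
  "ppart q n = q ^ multiplicity q n"

definition pi_element :: "('a, 'b) monoid_scheme \<Rightarrow> nat set \<Rightarrow> 'a \<Rightarrow> bool" where
  "pi_element G \<pi> g \<longleftrightarrow> g \<in> carrier G \<and>
     (\<forall>p. Factorial_Ring.prime p \<and> p dvd group.ord G g \<longrightarrow> p \<in> \<pi>)"

definition conj_class :: "('a, 'b) monoid_scheme \<Rightarrow> 'a \<Rightarrow> 'a set" where
  "conj_class G g = {x \<otimes>\<^bsub>G\<^esub> g \<otimes>\<^bsub>G\<^esub> inv\<^bsub>G\<^esub> x | x. x \<in> carrier G}"

definition centre :: "('a, 'b) monoid_scheme \<Rightarrow> 'a set" where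
  "centre G = {z \<in> carrier G. \<forall>x \<in> carrier G. z \<otimes>\<^bsub>G\<^esub> x = x \<otimes>\<^bsub>G\<^esub> z}"

definition S_qprime :: "('a, 'b) monoid_scheme \<Rightarrow> nat set \<Rightarrow> nat \<Rightarrow> 'a set" where
  "S_qprime G \<pi> q = (\<Union>g \<in> {g. pi_element G \<pi> g \<and> \<not> q dvd card (conj_class G g)}. conj_class G g)"

definition sylow_subgroup :: "('a, 'b) monoid_scheme \<Rightarrow> nat \<Rightarrow> 'a set \<Rightarrow> bool" where
  "sylow_subgroup G q Q \<longleftrightarrow> subgroup Q G \<and> card Q = ppart q (order G)"

end

theory Submission
  imports Defs
begin

context group begin

lemma subgroup_of_sub:
  assumes "subgroup H G" "subgroup P (G\<lparr>carrier := H\<rparr>)"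
  shows "subgroup P G"
proof -
  interpret H: group "G\<lparr>carrier := H\<rparr>" using assms(1) subgroup.subgroup_is_group is_group by blast
  have PH: "P \<subseteq> H" using assms(2) subgroup.subset by force
  show ?thesis
  proof (rule subgroupI)
    show "P \<subseteq> carrier G" using PH assms(1) subgroup.subset by blast
    show "P \<noteq> {}" using assms(2) subgroup.one_closed by blast
    fix a b assume a: "a \<in> P"
    show "inv a \<in> P" using subgroup.m_inv_closed[OF assms(2) a] m_inv_consistent[OF assms(1)] PH a by auto
    assume "b \<in> P"
    thus "a \<otimes> b \<in> P" using subgroup.m_closed[OF assms(2) a] by simp
  qed
qed

lemma card_union_rcosets:
  assumes fin: "finite (carrier G)" and H: "subgroup H G" and W: "W \<subseteq> carrier G"
    and cl: "\<And>h w. h \<in> H \<Longrightarrow> w \<in> W \<Longrightarrow> h \<otimes> w \<in> W"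
  shows "card H * card ((\<lambda>w. H #> w) ` W) = card W"
proof -
  have U: "\<Union> ((\<lambda>w. H #> w) ` W) = W"
  proof
    show "\<Union> ((\<lambda>w. H #> w) ` W) \<subseteq> W" using cl unfolding r_coset_def by auto
    show "W \<subseteq> \<Union> ((\<lambda>w. H #> w) ` W)" using rcos_self[OF _ H] W by blast
  qed
  have R: "(\<lambda>w. H #> w) ` W \<subseteq> rcosets H" using W unfolding RCOSETS_def by auto
  have "card H * card ((\<lambda>w. H #> w) ` W) = card (\<Union> ((\<lambda>w. H #> w) ` W))"
  proof (rule card_partition)
    show "finite ((\<lambda>w. H #> w) ` W)" using W fin finite_subset by blast
    show "finite (\<Union> ((\<lambda>w. H #> w) ` W))" using U W fin finite_subset by auto
    show "\<And>c. c \<in> (\<lambda>w. H #> w) ` W \<Longrightarrow> card c = card H"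
      using R card_rcosets_equal H subgroup.subset by (metis subsetD)
    show "\<And>c1 c2. c1 \<in> (\<lambda>w. H #> w) ` W \<Longrightarrow> c2 \<in> (\<lambda>w. H #> w) ` W \<Longrightarrow> c1 \<noteq> c2 \<Longrightarrow> c1 \<inter> c2 = {}"
      using rcos_disjoint[OF H] R unfolding pairwise_def disjnt_def by blast
  qed
  thus ?thesis using U by simp
qed

lemma card_dvd_closed:
  assumes fin: "finite (carrier G)" and H: "subgroup H G" and W: "W \<subseteq> carrier G"
    and cl: "\<And>h w. h \<in> H \<Longrightarrow> w \<in> W \<Longrightarrow> h \<otimes> w \<in> W"
  shows "card H dvd card W"
  using card_union_rcosets[OF assms] by (metis dvd_triv_left)

lemma inv_cancel_simps:
  "x \<in> carrier G \<Longrightarrow> a \<in> carrier G \<Longrightarrow> inv x \<otimes> (x \<otimes> a) = a"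
  "x \<in> carrier G \<Longrightarrow> a \<in> carrier G \<Longrightarrow> x \<otimes> (inv x \<otimes> a) = a"
  by (simp_all add: m_assoc[symmetric])

lemma centre_subgroup: "subgroup (centre G) G"
proof (rule subgroupI)
  show "centre G \<subseteq> carrier G" unfolding centre_def by auto
  show "centre G \<noteq> {}" unfolding centre_def by (auto intro!: exI[of _ \<one>])
  fix a b assume a: "a \<in> centre G"
  then have ac: "a \<in> carrier G" and ax: "\<And>x. x \<in> carrier G \<Longrightarrow> a \<otimes> x = x \<otimes> a" unfolding centre_def by auto
  have "\<And>x. x \<in> carrier G \<Longrightarrow> inv a \<otimes> x = x \<otimes> inv a"
  proof -
    fix x assume x: "x \<in> carrier G"
    have "inv a \<otimes> x = inv a \<otimes> (x \<otimes> a) \<otimes> inv a" using ac x by (simp add: m_assoc)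
    also have "... = inv a \<otimes> (a \<otimes> x) \<otimes> inv a" using ax x by simp
    also have "... = x \<otimes> inv a" using ac x by (simp add: m_assoc[symmetric])
    finally show "inv a \<otimes> x = x \<otimes> inv a" .
  qed
  thus "inv a \<in> centre G" using ac unfolding centre_def by auto
  assume "b \<in> centre G"
  then have bc: "b \<in> carrier G" and bx: "\<And>x. x \<in> carrier G \<Longrightarrow> b \<otimes> x = x \<otimes> b" unfolding centre_def by auto
  have "\<And>x. x \<in> carrier G \<Longrightarrow> a \<otimes> b \<otimes> x = x \<otimes> (a \<otimes> b)"
    using ax bx ac bc by (metis m_assoc)
  thus "a \<otimes> b \<in> centre G" using ac bc unfolding centre_def by auto
qed

lemma centreD: "z \<in> centre G \<Longrightarrow> x \<in> carrier G \<Longrightarrow> z \<otimes> x = x \<otimes> z"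
  "z \<in> centre G \<Longrightarrow> z \<in> carrier G"
  unfolding centre_def by auto

lemma conj_class_carrier: "g \<in> carrier G \<Longrightarrow> conj_class G g \<subseteq> carrier G"
  unfolding conj_class_def by auto

lemma conj_self: "g \<in> carrier G \<Longrightarrow> g \<in> conj_class G g"
  unfolding conj_class_def by (auto intro!: exI[of _ \<one>])

lemma conj_conj:
  assumes "g \<in> carrier G" "x \<in> carrier G" "y \<in> carrier G"
  shows "x \<otimes> (y \<otimes> g \<otimes> inv y) \<otimes> inv x = (x \<otimes> y) \<otimes> g \<otimes> inv (x \<otimes> y)"
  using assms by (simp add: inv_mult_group m_assoc)

lemma conj_class_sub:
  assumes g: "g \<in> carrier G" and y: "y \<in> carrier G"
  shows "conj_class G (y \<otimes> g \<otimes> inv y) \<subseteq> conj_class G g"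
proof
  fix k assume "k \<in> conj_class G (y \<otimes> g \<otimes> inv y)"
  then obtain x where x: "x \<in> carrier G" "k = x \<otimes> (y \<otimes> g \<otimes> inv y) \<otimes> inv x" unfolding conj_class_def by auto
  then have "k = (x \<otimes> y) \<otimes> g \<otimes> inv (x \<otimes> y)" using conj_conj g y by simp
  then show "k \<in> conj_class G g" using x y unfolding conj_class_def by blast
qed

lemma conj_class_eq:
  assumes g: "g \<in> carrier G" and h: "h \<in> conj_class G g"
  shows "conj_class G h = conj_class G g"
proof -
  obtain y where y: "y \<in> carrier G" "h = y \<otimes> g \<otimes> inv y" using h unfolding conj_class_def by auto
  have 1: "conj_class G h \<subseteq> conj_class G g" using conj_class_sub y g by simp
  have "g = inv y \<otimes> h \<otimes> inv (inv y)" using y g by (simp add: m_assoc) (simp add: m_assoc[symmetric])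
  then have 2: "conj_class G g \<subseteq> conj_class G h"
    using conj_class_sub[of h "inv y"] y g by simp
  show ?thesis using 1 2 by blast
qed

lemma conj_one_imp:
  assumes x: "x \<in> carrier G" and b: "b \<in> carrier G" and e: "x \<otimes> b \<otimes> inv x = \<one>"
  shows "b = \<one>"
proof -
  have "x \<otimes> b = x \<otimes> b \<otimes> inv x \<otimes> x" using x b by (simp add: m_assoc)
  also have "... = x \<otimes> \<one>" using e x by simp
  finally show ?thesis using x b l_cancel by blast
qed

lemma conj_mult_aux:
  assumes x: "x \<in> carrier G" and a: "a \<in> carrier G" and g: "g \<in> carrier G"
  shows "x \<otimes> a \<otimes> inv x \<otimes> (x \<otimes> g \<otimes> inv x) = x \<otimes> (a \<otimes> g) \<otimes> inv x"
proof -
  have "x \<otimes> a \<otimes> inv x \<otimes> (x \<otimes> g \<otimes> inv x) = x \<otimes> a \<otimes> (inv x \<otimes> x) \<otimes> g \<otimes> inv x"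
    using x a g by (simp only: m_assoc m_closed inv_closed)
  also have "... = x \<otimes> (a \<otimes> g) \<otimes> inv x" using x a g by (simp add: m_assoc)
  finally show ?thesis .
qed

lemma ord_conj:
  assumes g: "g \<in> carrier G" and x: "x \<in> carrier G"
  shows "ord (x \<otimes> g \<otimes> inv x) = ord g"
proof -
  have p: "(x \<otimes> g \<otimes> inv x) [^] n = x \<otimes> (g [^] n) \<otimes> inv x" for n :: nat
  proof (induction n)
    case 0 then show ?case using x by simp
  next
    case (Suc n)
    have "(x \<otimes> g \<otimes> inv x) [^] Suc n = x \<otimes> (g [^] n) \<otimes> inv x \<otimes> (x \<otimes> g \<otimes> inv x)"
      using Suc by simp
    also have "... = x \<otimes> (g [^] n \<otimes> g) \<otimes> inv x" using conj_mult_aux x g by simp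
    finally show ?case by simp
  qed
  have "(x \<otimes> g \<otimes> inv x) [^] n = \<one> \<longleftrightarrow> g [^] n = \<one>" for n :: nat
  proof
    assume "(x \<otimes> g \<otimes> inv x) [^] n = \<one>"
    then have "x \<otimes> (g [^] n) \<otimes> inv x = \<one>" using p by simp
    thus "g [^] n = \<one>" by (rule conj_one_imp[OF x nat_pow_closed[OF g]])
  next
    assume "g [^] n = \<one>" thus "(x \<otimes> g \<otimes> inv x) [^] n = \<one>" using p x by simp
  qed
  then have "\<forall>n. (x \<otimes> g \<otimes> inv x) [^] n = \<one> \<longleftrightarrow> ord g dvd n" using pow_eq_id[OF g] by blast
  then show ?thesis using ord_unique[of "x \<otimes> g \<otimes> inv x" "ord g"] g x by blast
qed

lemma pi_conj:
  assumes "pi_element G \<pi> g" "x \<in> carrier G"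
  shows "pi_element G \<pi> (x \<otimes> g \<otimes> inv x)"
  using assms ord_conj unfolding pi_element_def by auto

lemma S_char: "S_qprime G \<pi> q = {g. pi_element G \<pi> g \<and> \<not> q dvd card (conj_class G g)}"
proof
  show "S_qprime G \<pi> q \<subseteq> {g. pi_element G \<pi> g \<and> \<not> q dvd card (conj_class G g)}"
  proof
    fix h assume "h \<in> S_qprime G \<pi> q"
    then obtain g where g: "pi_element G \<pi> g" "\<not> q dvd card (conj_class G g)" "h \<in> conj_class G g"
      unfolding S_qprime_def by auto
    have gc: "g \<in> carrier G" using g(1) unfolding pi_element_def by auto
    have "conj_class G h = conj_class G g" using conj_class_eq gc g by auto
    moreover have "pi_element G \<pi> h" using g(3) pi_conj[OF g(1)] unfolding conj_class_def by auto
    ultimately show "h \<in> {g. pi_element G \<pi> g \<and> \<not> q dvd card (conj_class G g)}" using g by auto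
  qed
  show "{g. pi_element G \<pi> g \<and> \<not> q dvd card (conj_class G g)} \<subseteq> S_qprime G \<pi> q"
  proof
    fix h assume "h \<in> {g. pi_element G \<pi> g \<and> \<not> q dvd card (conj_class G g)}"
    then have h: "pi_element G \<pi> h" "\<not> q dvd card (conj_class G h)" by auto
    then have "h \<in> conj_class G h" using conj_self unfolding pi_element_def by auto
    then show "h \<in> S_qprime G \<pi> q" using h unfolding S_qprime_def by blast
  qed
qed

lemma conj_central:
  assumes z: "z \<in> centre G" and g: "g \<in> carrier G"
  shows "conj_class G (z \<otimes> g) = z <# conj_class G g"
proof -
  have zc: "z \<in> carrier G" using z centreD by auto
  have "x \<otimes> (z \<otimes> g) \<otimes> inv x = z \<otimes> (x \<otimes> g \<otimes> inv x)" if x: "x \<in> carrier G" for x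
    using centreD(1)[OF z x] x zc g by (metis m_assoc m_closed inv_closed)
  then show ?thesis unfolding conj_class_def l_coset_def
  proof (intro equalityI subsetI)
    fix k assume "k \<in> {x \<otimes> (z \<otimes> g) \<otimes> inv x |x. x \<in> carrier G}"
    then obtain x where "x \<in> carrier G" "k = x \<otimes> (z \<otimes> g) \<otimes> inv x" by auto
    then show "k \<in> (\<Union>h\<in>{x \<otimes> g \<otimes> inv x |x. x \<in> carrier G}. {z \<otimes> h})"
      using \<open>\<And>x. x \<in> carrier G \<Longrightarrow> _\<close> by blast
  next
    fix k assume "k \<in> (\<Union>h\<in>{x \<otimes> g \<otimes> inv x |x. x \<in> carrier G}. {z \<otimes> h})"
    then obtain x where x: "x \<in> carrier G" "k = z \<otimes> (x \<otimes> g \<otimes> inv x)" by auto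
    then have "k = x \<otimes> (z \<otimes> g) \<otimes> inv x" using \<open>\<And>x. x \<in> carrier G \<Longrightarrow> _\<close> by simp
    then show "k \<in> {x \<otimes> (z \<otimes> g) \<otimes> inv x |x. x \<in> carrier G}" using x by blast
  qed
qed

lemma card_lcos:
  assumes z: "z \<in> carrier G" and K: "K \<subseteq> carrier G"
  shows "card (z <# K) = card K"
proof -
  have "inj_on (\<lambda>h. z \<otimes> h) K" using z K l_cancel unfolding inj_on_def by blast
  moreover have "z <# K = (\<lambda>h. z \<otimes> h) ` K" unfolding l_coset_def by auto
  ultimately show ?thesis by (simp add: card_image)
qed

lemma conj_action: "group_action G (carrier G) (\<lambda>g. (\<lambda>h \<in> carrier G. g \<otimes> h \<otimes> (inv g)))"
  by (rule action_by_conjugation)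

lemma class_stab:
  assumes fin: "finite (carrier G)" and g: "g \<in> carrier G"
  shows "card (conj_class G g) * card {x \<in> carrier G. x \<otimes> g = g \<otimes> x} = order G"
    and "subgroup {x \<in> carrier G. x \<otimes> g = g \<otimes> x} G"
proof -
  interpret A: group_action G "carrier G" "\<lambda>g. (\<lambda>h \<in> carrier G. g \<otimes> h \<otimes> (inv g))"
    by (rule conj_action)
  have o: "orbit G (\<lambda>g. (\<lambda>h \<in> carrier G. g \<otimes> h \<otimes> (inv g))) g = conj_class G g"
    unfolding orbit_def conj_class_def using g by auto
  have e: "x \<otimes> g \<otimes> inv x = g \<longleftrightarrow> x \<otimes> g = g \<otimes> x" if x: "x \<in> carrier G" for x
    using x g by (metis inv_solve_right m_closed)
  have s: "stabilizer G (\<lambda>g. (\<lambda>h \<in> carrier G. g \<otimes> h \<otimes> (inv g))) g = {x \<in> carrier G. x \<otimes> g = g \<otimes> x}"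
    unfolding stabilizer_def using g e by auto
  show "card (conj_class G g) * card {x \<in> carrier G. x \<otimes> g = g \<otimes> x} = order G"
    using A.orbit_stabilizer_theorem[OF g] o s by simp
  show "subgroup {x \<in> carrier G. x \<otimes> g = g \<otimes> x} G"
    using A.stabilizer_subgroup[OF g] s by simp
qed

end

lemma fixpoint_mod:
  fixes R (structure)
  assumes R: "group R" and Rfin: "finite (carrier R)" and Rcard: "card (carrier R) = q ^ k"
    and q: "Factorial_Ring.prime (q::nat)" and E: "finite E"
    and f: "\<And>x e. x \<in> carrier R \<Longrightarrow> e \<in> E \<Longrightarrow> f x e \<in> E"
    and one: "\<And>e. e \<in> E \<Longrightarrow> f \<one> e = e"
    and comp: "\<And>x y e. x \<in> carrier R \<Longrightarrow> y \<in> carrier R \<Longrightarrow> e \<in> E \<Longrightarrow> f (x \<otimes> y) e = f x (f y e)"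
  shows "q dvd card {e \<in> E. \<exists>x\<in>carrier R. f x e \<noteq> e}"
proof -
  interpret R: group R by (rule R)
  define \<phi> where "\<phi> = (\<lambda>x. restrict (f x) E)"
  have inv1: "f (inv x) (f x e) = e" if "x \<in> carrier R" "e \<in> E" for x e
    using comp[of "inv x" x e] one that by simp
  have inv2: "f x (f (inv x) e) = e" if "x \<in> carrier R" "e \<in> E" for x e
    using comp[of x "inv x" e] one that by simp
  have bij: "\<phi> x \<in> Bij E" if x: "x \<in> carrier R" for x
  proof -
    have "bij_betw (f x) E E"
    proof (rule bij_betw_byWitness[where f' = "f (inv x)"])
      show "\<forall>a\<in>E. f (inv x) (f x a) = a" using inv1 x by blast
      show "\<forall>a'\<in>E. f x (f (inv x) a') = a'" using inv2 x by blast
      show "f x ` E \<subseteq> E" using f x by blast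
      show "f (inv x) ` E \<subseteq> E" using f x by blast
    qed
    then have "bij_betw (restrict (f x) E) E E" using bij_betw_cong[of E "restrict (f x) E" "f x" E] by simp
    then show ?thesis unfolding Bij_def \<phi>_def by simp
  qed
  have hom: "\<phi> \<in> hom R (BijGroup E)"
  proof (rule homI)
    show "\<And>x. x \<in> carrier R \<Longrightarrow> \<phi> x \<in> carrier (BijGroup E)" using bij by (simp add: BijGroup_def)
    fix x y assume x: "x \<in> carrier R" and y: "y \<in> carrier R"
    have "\<phi> (x \<otimes> y) = compose E (\<phi> x) (\<phi> y)"
    proof (rule ext)
      fix e show "\<phi> (x \<otimes> y) e = compose E (\<phi> x) (\<phi> y) e"
        unfolding \<phi>_def compose_def using comp[OF x y] f[OF y] by simp
    qed
    then show "\<phi> (x \<otimes> y) = \<phi> x \<otimes>\<^bsub>BijGroup E\<^esub> \<phi> y"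
      using bij x y by (simp add: BijGroup_def)
  qed
  interpret A: group_action R E \<phi>
    unfolding group_action_def group_hom_def group_hom_axioms_def
    using R group_BijGroup hom by blast
  let ?N = "{e \<in> E. \<exists>x\<in>carrier R. f x e \<noteq> e}"
  let ?C = "{orbit R \<phi> e | e. e \<in> ?N}"
  have orb: "orbit R \<phi> e = (\<lambda>x. f x e) ` carrier R" if "e \<in> E" for e
    using that unfolding orbit_def \<phi>_def by auto
  have orbN: "orbit R \<phi> e \<subseteq> ?N" if e: "e \<in> ?N" for e
  proof
    fix e' assume "e' \<in> orbit R \<phi> e"
    then obtain y where y: "y \<in> carrier R" "e' = f y e" using orb e by auto
    have e'E: "e' \<in> E" using f y e by auto
    show "e' \<in> ?N"
    proof (rule ccontr)
      assume "e' \<notin> ?N"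
      then have fix': "\<forall>x\<in>carrier R. f x e' = e'" using e'E by auto
      obtain x where x: "x \<in> carrier R" "f x e \<noteq> e" using e by auto
      have "f x e = f x (f (inv y) e')" using inv1 y e by auto
      also have "... = f (inv y) e'" using fix' x y by (metis R.inv_closed R.m_closed comp e'E)
      also have "... = e" using inv1 y e by auto
      finally show False using x by simp
    qed
  qed
  have U: "\<Union> ?C = ?N"
  proof
    show "\<Union> ?C \<subseteq> ?N" using orbN by blast
    show "?N \<subseteq> \<Union> ?C" using A.orbit_refl by blast
  qed
  have "q dvd card (\<Union> ?C)"
  proof (rule dvd_partition)
    show "finite (\<Union> ?C)" using U E by simp
    show "\<forall>c\<in>?C. q dvd card c"
    proof
      fix c assume "c \<in> ?C"
      then obtain e where e: "e \<in> ?N" "c = orbit R \<phi> e" by auto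
      have "card c * card (stabilizer R \<phi> e) = q ^ k"
        using A.orbit_stabilizer_theorem[of e] e Rcard by (simp add: order_def)
      then have "card c dvd q ^ k" by (metis dvd_triv_left)
      then obtain i where i: "card c = q ^ i" using divides_primepow_nat[OF q] by blast
      have "i \<noteq> 0"
      proof
        assume "i = 0"
        then have "card c = 1" using i by simp
        moreover have "e \<in> c" using e A.orbit_refl by auto
        ultimately have "c = {e}" by (metis card_1_singletonE singletonD)
        then have "\<forall>x\<in>carrier R. f x e = e" using e orb by auto
        then show False using e by auto
      qed
      then show "q dvd card c" using i by simp
    qed
    show "\<forall>c1\<in>?C. \<forall>c2\<in>?C. c1 \<noteq> c2 \<longrightarrow> c1 \<inter> c2 = {}"
      using A.disjoint_union unfolding orbits_def by blast
  qed
  then show ?thesis using U by simp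
qed

context group begin

lemma comm_conj: "x \<in> carrier G \<Longrightarrow> g \<in> carrier G \<Longrightarrow> x \<otimes> g = g \<otimes> x \<Longrightarrow> x \<otimes> g \<otimes> inv x = g"
  by (simp add: m_assoc)

lemma conj_comm: "x \<in> carrier G \<Longrightarrow> g \<in> carrier G \<Longrightarrow> x \<otimes> g \<otimes> inv x = g \<Longrightarrow> x \<otimes> g = g \<otimes> x"
  by (metis inv_solve_right m_closed)

lemma mult_inv_one: "a \<in> carrier G \<Longrightarrow> b \<in> carrier G \<Longrightarrow> a \<otimes> inv b = \<one> \<Longrightarrow> a = b"
  by (metis inv_solve_right l_one one_closed)

lemma pow_sub:
  assumes fin: "finite (carrier G)" and H: "subgroup H G" and z: "z \<in> H"
  shows "z [^] card H = \<one>"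
proof -
  interpret H: group "G\<lparr>carrier := H\<rparr>" using H subgroup.subgroup_is_group is_group by blast
  have "z [^]\<^bsub>G\<lparr>carrier := H\<rparr>\<^esub> order (G\<lparr>carrier := H\<rparr>) = \<one>\<^bsub>G\<lparr>carrier := H\<rparr>\<^esub>"
    using H.pow_order_eq_1 z by simp
  then show ?thesis using nat_pow_consistent[of z "card H" H] by (simp add: order_def)
qed

lemma pi_mult:
  assumes q: "Factorial_Ring.prime (q::nat)" and qpi: "q \<in> \<pi>" and z: "z \<in> carrier G"
    and g: "pi_element G \<pi> g" and c: "z \<otimes> g = g \<otimes> z" and zq: "z [^] (q ^ k) = \<one>"
  shows "pi_element G \<pi> (z \<otimes> g)"
proof -
  have gc: "g \<in> carrier G" using g unfolding pi_element_def by auto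
  have o: "ord (z \<otimes> g) dvd ord z * ord g" using ord_mul_divides[OF c z gc] .
  have oz: "ord z dvd q ^ k" using pow_eq_id[OF z] zq by blast
  show ?thesis unfolding pi_element_def
  proof (intro conjI allI impI)
    show "z \<otimes> g \<in> carrier G" using z gc by simp
    fix p :: nat assume p: "Factorial_Ring.prime p \<and> p dvd ord (z \<otimes> g)"
    then have "p dvd ord z * ord g" using o dvd_trans by blast
    then have "p dvd ord z \<or> p dvd ord g" using p prime_dvd_mult_iff by blast
    then show "p \<in> \<pi>"
    proof
      assume "p dvd ord z"
      then have "p dvd q ^ k" using oz dvd_trans by blast
      then have "p dvd q" using p prime_dvd_power by blast
      then have "p = q" using p q primes_dvd_imp_eq by blast
      then show ?thesis using qpi by simp
    next
      assume "p dvd ord g" then show ?thesis using g p unfolding pi_element_def by blast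
    qed
  qed
qed

lemma free_centre:
  assumes fin: "finite (carrier G)" and P: "subgroup P G" and Pc: "P \<subseteq> centre G"
    and cP: "card P = q ^ a" and q: "Factorial_Ring.prime (q::nat)"
    and h: "h \<in> carrier G" and nd: "\<not> q dvd card (conj_class G h)"
    and p: "p \<in> P" and ph: "p \<otimes> h \<in> conj_class G h"
  shows "p = \<one>"
proof -
  define K where "K = conj_class G h"
  have Kc: "K \<subseteq> carrier G" using conj_class_carrier h K_def by simp
  have pK: "p <# K = K" using conj_central[of p h] conj_class_eq[OF h ph] Pc p h K_def by auto
  define P0 where "P0 = {w \<in> P. w <# K = K}"
  have Pcar: "P \<subseteq> carrier G" using P subgroup.subset by blast
  have P0: "subgroup P0 G"
  proof (rule subgroupI)
    show "P0 \<subseteq> carrier G" using Pcar P0_def by auto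
    show "P0 \<noteq> {}" using lcos_mult_one[OF Kc] subgroup.one_closed[OF P] P0_def by auto
    fix a b assume a: "a \<in> P0"
    then have aP: "a \<in> P" and aK: "a <# K = K" using P0_def by auto
    have ac: "a \<in> carrier G" using aP Pcar by auto
    have "inv a <# K = inv a <# (a <# K)" using aK by simp
    also have "... = K" using lcos_m_assoc[OF Kc, of "inv a" a] ac lcos_mult_one[OF Kc] by simp
    finally show "inv a \<in> P0" using subgroup.m_inv_closed[OF P aP] P0_def by auto
    assume b: "b \<in> P0"
    then have bP: "b \<in> P" and bK: "b <# K = K" using P0_def by auto
    have "(a \<otimes> b) <# K = K" using lcos_m_assoc[OF Kc, of a b] ac bP Pcar aK bK by auto
    then show "a \<otimes> b \<in> P0" using subgroup.m_closed[OF P aP bP] P0_def by auto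
  qed
  have d1: "card P0 dvd card K"
  proof (rule card_dvd_closed[OF fin P0 Kc])
    fix w k assume "w \<in> P0" "k \<in> K"
    then have "w \<otimes> k \<in> w <# K" unfolding l_coset_def by blast
    then show "w \<otimes> k \<in> K" using \<open>w \<in> P0\<close> P0_def by auto
  qed
  have d2: "card P0 dvd card P"
    by (rule card_dvd_closed[OF fin P0 Pcar]) (use P0_def subgroup.m_closed[OF P] in auto)
  obtain j where j: "card P0 = q ^ j" using d2 cP divides_primepow_nat[OF q] by auto
  have "j = 0"
  proof (rule ccontr)
    assume "j \<noteq> 0"
    then have "q dvd card P0" using j by simp
    then show False using d1 nd K_def dvd_trans by blast
  qed
  then have "card P0 = 1" using j by simp
  moreover have "\<one> \<in> P0" using lcos_mult_one[OF Kc] subgroup.one_closed[OF P] P0_def by auto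
  moreover have "p \<in> P0" using p pK P0_def by auto
  ultimately show "p = \<one>" by (metis card_1_singletonE singletonD)
qed

lemma centralised_not_dvd:
  assumes fin: "finite (carrier G)" and Q: "subgroup Q G" and cQ: "card Q = q ^ n"
    and n: "n = multiplicity q (order G)" and q: "Factorial_Ring.prime (q::nat)"
    and h: "h \<in> carrier G" and cm: "\<And>x. x \<in> Q \<Longrightarrow> x \<otimes> h = h \<otimes> x"
  shows "\<not> q dvd card (conj_class G h)"
proof
  assume qd: "q dvd card (conj_class G h)"
  let ?C = "{x \<in> carrier G. x \<otimes> h = h \<otimes> x}"
  have eq: "card (conj_class G h) * card ?C = order G" and C: "subgroup ?C G" using class_stab[OF fin h] by auto
  have Qcar: "Q \<subseteq> carrier G" using Q subgroup.subset by blast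
  have "card Q dvd card ?C"
  proof (rule card_dvd_closed[OF fin Q])
    show "?C \<subseteq> carrier G" by auto
    fix x c assume x: "x \<in> Q" and c: "c \<in> ?C"
    have xc: "x \<in> carrier G" using x Qcar by auto
    have "x \<otimes> c \<otimes> h = x \<otimes> (h \<otimes> c)" using c xc h by (simp add: m_assoc)
    also have "... = (x \<otimes> h) \<otimes> c" using xc c h by (simp add: m_assoc)
    also have "... = (h \<otimes> x) \<otimes> c" using cm[OF x] by simp
    also have "... = h \<otimes> (x \<otimes> c)" using xc c h by (simp add: m_assoc)
    finally show "x \<otimes> c \<in> ?C" using xc c by auto
  qed
  then have "q * q ^ n dvd card (conj_class G h) * card ?C" using qd cQ mult_dvd_mono by metis
  then have "q * q ^ n dvd order G" using eq by simp
  then have "q ^ Suc n dvd order G" by simp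
  moreover have "order G \<noteq> 0" using fin order_gt_0_iff_finite by auto
  ultimately have "Suc n \<le> multiplicity q (order G)"
    using multiplicity_geI[of "order G" q "Suc n"] q by (metis not_prime_unit)
  then show False using n by simp
qed

end

context group begin

lemma central_lcos_rcos:
  assumes z: "z \<in> centre G" and Q: "Q \<subseteq> carrier G" and g: "g \<in> carrier G"
  shows "z <# (Q #> g) = Q #> (z \<otimes> g)"
proof -
  have zc: "z \<in> carrier G" using z centreD by auto
  have e: "z \<otimes> (y \<otimes> g) = y \<otimes> (z \<otimes> g)" if y: "y \<in> Q" for y
  proof -
    have yc: "y \<in> carrier G" using y Q by auto
    have "z \<otimes> (y \<otimes> g) = (z \<otimes> y) \<otimes> g" using zc yc g by (simp add: m_assoc)
    also have "... = (y \<otimes> z) \<otimes> g" using centreD(1)[OF z yc] by simp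
    also have "... = y \<otimes> (z \<otimes> g)" using zc yc g by (simp add: m_assoc)
    finally show ?thesis .
  qed
  show ?thesis unfolding l_coset_def r_coset_def using e by auto
qed

lemma centre_p_sub_sylow:
  assumes fin: "finite (carrier G)" and P: "subgroup P G" and Pc: "P \<subseteq> centre G"
    and cP: "card P = q ^ a" and q: "Factorial_Ring.prime (q::nat)"
    and Q: "subgroup Q G" and cQ: "card Q = q ^ n" and n: "n = multiplicity q (order G)"
  shows "P \<subseteq> Q"
proof -
  interpret R: group "G\<lparr>carrier := P\<rparr>" using P subgroup.subgroup_is_group is_group by blast
  have Qcar: "Q \<subseteq> carrier G" using Q subgroup.subset by blast
  have Pcar: "P \<subseteq> carrier G" using P subgroup.subset by blast
  let ?E = "rcosets Q"
  let ?f = "\<lambda>z C. l_coset G z C"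
  have Ecar: "C \<subseteq> carrier G" if "C \<in> ?E" for C
    using subgroup.rcosets_carrier[OF Q is_group that] .
  have "q dvd card {e \<in> ?E. \<exists>x\<in>carrier (G\<lparr>carrier := P\<rparr>). ?f x e \<noteq> e}"
  proof (rule fixpoint_mod[where R = "G\<lparr>carrier := P\<rparr>" and k = a])
    show "group (G\<lparr>carrier := P\<rparr>)" by (rule R.is_group)
    show "finite (carrier (G\<lparr>carrier := P\<rparr>))" using fin Pcar finite_subset by auto
    show "card (carrier (G\<lparr>carrier := P\<rparr>)) = q ^ a" using cP by simp
    show "Factorial_Ring.prime q" by (rule q)
    show "finite ?E" using fin Qcar by (simp add: RCOSETS_def)
    show "\<And>x e. x \<in> carrier (G\<lparr>carrier := P\<rparr>) \<Longrightarrow> e \<in> ?E \<Longrightarrow> ?f x e \<in> ?E"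
    proof -
      fix x e assume x: "x \<in> carrier (G\<lparr>carrier := P\<rparr>)" and e: "e \<in> ?E"
      then obtain g where g: "g \<in> carrier G" "e = Q #> g" unfolding RCOSETS_def by auto
      have "?f x e = Q #> (x \<otimes> g)" using central_lcos_rcos[of x Q g] x Pc Qcar g by auto
      then show "?f x e \<in> ?E" using x Pcar g unfolding RCOSETS_def by auto
    qed
    show "\<And>e. e \<in> ?E \<Longrightarrow> ?f \<one>\<^bsub>G\<lparr>carrier := P\<rparr>\<^esub> e = e"
      using lcos_mult_one Ecar by simp
    show "\<And>x y e. x \<in> carrier (G\<lparr>carrier := P\<rparr>) \<Longrightarrow> y \<in> carrier (G\<lparr>carrier := P\<rparr>) \<Longrightarrow> e \<in> ?E \<Longrightarrow>
       ?f (x \<otimes>\<^bsub>G\<lparr>carrier := P\<rparr>\<^esub> y) e = ?f x (?f y e)"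
    proof -
      fix x y e assume "x \<in> carrier (G\<lparr>carrier := P\<rparr>)" "y \<in> carrier (G\<lparr>carrier := P\<rparr>)" "e \<in> ?E"
      then show "?f (x \<otimes>\<^bsub>G\<lparr>carrier := P\<rparr>\<^esub> y) e = ?f x (?f y e)"
        using lcos_m_assoc[of e x y] Ecar Pcar by auto
    qed
  qed
  moreover have "\<not> q dvd card ?E"
  proof
    assume "q dvd card ?E"
    then have "q * q ^ n dvd card ?E * card Q" using cQ by simp
    then have "q ^ Suc n dvd order G" using lagrange[OF Q] by simp
    moreover have "order G \<noteq> 0" using fin order_gt_0_iff_finite by auto
    ultimately have "Suc n \<le> multiplicity q (order G)"
      using multiplicity_geI[of "order G" q "Suc n"] q by (metis not_prime_unit)
    then show False using n by simp
  qed
  ultimately have "{e \<in> ?E. \<exists>x\<in>carrier (G\<lparr>carrier := P\<rparr>). ?f x e \<noteq> e} \<noteq> ?E" by metis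
  then obtain C where C0: "C \<in> ?E" "C \<notin> {e \<in> ?E. \<exists>x\<in>carrier (G\<lparr>carrier := P\<rparr>). ?f x e \<noteq> e}" by blast
  then have C: "C \<in> ?E" "\<forall>x\<in>P. x <# C = C" by auto
  then obtain g where g: "g \<in> carrier G" "C = Q #> g" unfolding RCOSETS_def by auto
  show "P \<subseteq> Q"
  proof
    fix z assume z: "z \<in> P"
    have zc: "z \<in> carrier G" using z Pcar by auto
    have "g \<in> Q #> g" using rcos_self[OF g(1) Q] .
    then have "z \<otimes> g \<in> z <# (Q #> g)" unfolding l_coset_def by blast
    then have "z \<otimes> g \<in> Q #> g" using C z g by auto
    then have "z \<otimes> g \<otimes> inv g \<in> Q" using subgroup.rcos_module_imp[OF Q is_group g(1)] by blast
    then show "z \<in> Q" using zc g by (simp add: m_assoc)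
  qed
qed

end

context group begin

lemma comm_mult:
  assumes "x \<in> carrier G" "a \<in> carrier G" "b \<in> carrier G"
    and "x \<otimes> a = a \<otimes> x" "x \<otimes> b = b \<otimes> x"
  shows "x \<otimes> (a \<otimes> b) = (a \<otimes> b) \<otimes> x"
proof -
  have "x \<otimes> (a \<otimes> b) = (x \<otimes> a) \<otimes> b" using assms(1-3) by (simp add: m_assoc)
  also have "... = (a \<otimes> x) \<otimes> b" by (simp only: assms(4))
  also have "... = a \<otimes> (x \<otimes> b)" using assms(1-3) by (simp add: m_assoc)
  also have "... = a \<otimes> (b \<otimes> x)" by (simp only: assms(5))
  also have "... = (a \<otimes> b) \<otimes> x" using assms(1-3) by (simp add: m_assoc)
  finally show ?thesis .
qed

lemma rcos_img: "H #> a = (\<lambda>h. h \<otimes> a) ` H"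
  unfolding r_coset_def by auto

lemma conj_rcos_central:
  assumes Pc: "P \<subseteq> centre G" and x: "x \<in> carrier G" and g: "g \<in> carrier G"
  shows "(\<lambda>c. x \<otimes> c \<otimes> inv x) ` (P #> g) = P #> (x \<otimes> g \<otimes> inv x)"
proof -
  have e: "x \<otimes> (p \<otimes> g) \<otimes> inv x = p \<otimes> (x \<otimes> g \<otimes> inv x)" if p: "p \<in> P" for p
  proof -
    have pc: "p \<in> carrier G" using p Pc centreD by auto
    have "x \<otimes> (p \<otimes> g) = (x \<otimes> p) \<otimes> g" using pc x g by (simp add: m_assoc)
    also have "... = (p \<otimes> x) \<otimes> g" using centreD(1)[of p x] p Pc x by auto
    finally have "x \<otimes> (p \<otimes> g) = p \<otimes> (x \<otimes> g)" using pc x g by (simp add: m_assoc)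
    then show ?thesis using pc x g by (simp add: m_assoc)
  qed
  have "(\<lambda>c. x \<otimes> c \<otimes> inv x) ` (P #> g) = (\<lambda>p. x \<otimes> (p \<otimes> g) \<otimes> inv x) ` P"
    unfolding rcos_img image_image by simp
  also have "... = (\<lambda>p. p \<otimes> (x \<otimes> g \<otimes> inv x)) ` P" using e by (rule image_cong[OF refl])
  also have "... = P #> (x \<otimes> g \<otimes> inv x)" unfolding rcos_img by simp
  finally show ?thesis .
qed

lemma S_conj:
  assumes g: "g \<in> S_qprime G \<pi> q" and x: "x \<in> carrier G"
  shows "x \<otimes> g \<otimes> inv x \<in> S_qprime G \<pi> q"
proof -
  have g1: "pi_element G \<pi> g" and g2: "\<not> q dvd card (conj_class G g)" using g S_char by auto
  have gc: "g \<in> carrier G" using g1 unfolding pi_element_def by auto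
  have "x \<otimes> g \<otimes> inv x \<in> conj_class G g" using x unfolding conj_class_def by blast
  then have "conj_class G (x \<otimes> g \<otimes> inv x) = conj_class G g" using conj_class_eq gc by blast
  then show ?thesis using S_char pi_conj[OF g1 x] g2 by auto
qed

end

lemma (in group) main_result:
  fixes \<pi> :: "nat set" and q :: nat
  assumes "finite (carrier G)"
    and "\<forall>p \<in> \<pi>. Factorial_Ring.prime p" and "q \<in> \<pi>"
  shows "ppart q (card (centre G)) dvd ppart q (card (S_qprime G \<pi> q)) \<and>
         (ppart q (card (centre G)) = ppart q (card (S_qprime G \<pi> q)) \<longrightarrow>
         (\<forall>Q. sylow_subgroup G q Q \<longrightarrow> centre (G\<lparr>carrier := Q\<rparr>) \<subseteq> centre G))"
proof -
  have fin: "finite (carrier G)" by fact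
  have qpi: "q \<in> \<pi>" by fact
  have q: "Factorial_Ring.prime q" using assms(2,3) by blast
  have q1: "q > 1" using q prime_gt_1_nat by blast
  have qnu: "\<not> is_unit q" using q not_prime_unit by blast
  define S where "S = S_qprime G \<pi> q"
  have Schar: "g \<in> S \<longleftrightarrow> pi_element G \<pi> g \<and> \<not> q dvd card (conj_class G g)" for g
    using S_char S_def by auto
  have Scar: "S \<subseteq> carrier G" using Schar unfolding pi_element_def by auto
  have Sfin: "finite S" using Scar fin finite_subset by blast
  have "conj_class G \<one> = {\<one>}" unfolding conj_class_def by (auto intro!: exI[of _ \<one>])
  moreover have "pi_element G \<pi> \<one>" unfolding pi_element_def using q1
    by (auto simp: prime_gt_1_nat)
  ultimately have oneS: "\<one> \<in> S" using Schar q1 by auto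
  have Sne: "card S \<noteq> 0" using oneS Sfin by auto
  define Zc where "Zc = card (centre G)"
  have Zcar: "centre G \<subseteq> carrier G" using centreD by auto
  have Zne: "Zc \<noteq> 0" unfolding Zc_def using Zcar fin finite_subset subgroup.one_closed[OF centre_subgroup]
    by (metis card_0_eq empty_iff)
  define a where "a = multiplicity q Zc"
  interpret Z: group "G\<lparr>carrier := centre G\<rparr>" using centre_subgroup subgroup.subgroup_is_group is_group by blast
  have "order (G\<lparr>carrier := centre G\<rparr>) = q ^ a * (Zc div q ^ a)"
    unfolding order_def Zc_def a_def by (simp add: multiplicity_dvd)
  then obtain P where P0: "subgroup P (G\<lparr>carrier := centre G\<rparr>)" and cP: "card P = q ^ a"
    using sylow_thm[OF q Z.is_group] fin Zcar finite_subset by (metis partial_object.select_convs(1) partial_object.surjective partial_object.update_convs(1))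
  have P: "subgroup P G" using subgroup_of_sub[OF centre_subgroup P0] .
  have Pc: "P \<subseteq> centre G" using subgroup.subset[OF P0] by simp
  have Pcar: "P \<subseteq> carrier G" using Pc Zcar by blast
  have PS: "p \<otimes> g \<in> S" if p: "p \<in> P" and g: "g \<in> S" for p g
  proof -
    have g1: "pi_element G \<pi> g" and g2: "\<not> q dvd card (conj_class G g)" using g Schar by auto
    have gc: "g \<in> carrier G" using g Scar by auto
    have pc: "p \<in> carrier G" using p Pcar by auto
    have "pi_element G \<pi> (p \<otimes> g)"
    proof (rule pi_mult[OF q qpi pc g1])
      show "p \<otimes> g = g \<otimes> p" using centreD(1)[of p g] p Pc gc by auto
      show "p [^] q ^ a = \<one>" using pow_sub[OF fin P p] cP by simp
    qed
    moreover have "card (conj_class G (p \<otimes> g)) = card (conj_class G g)"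
      using conj_central[of p g] card_lcos[OF pc conj_class_carrier[OF gc]] p Pc gc by auto
    ultimately show ?thesis using Schar g2 by auto
  qed
  have d1: "q ^ a dvd card S" using card_dvd_closed[OF fin P Scar PS] cP by simp
  have mS: "a \<le> multiplicity q (card S)" using multiplicity_geI[OF Sne qnu d1] .
  have part1: "ppart q Zc dvd ppart q (card S)"
    unfolding ppart_def a_def[symmetric] using mS by (simp add: le_imp_power_dvd)
  have part2: "centre (G\<lparr>carrier := Q\<rparr>) \<subseteq> centre G"
    if eq: "ppart q Zc = ppart q (card S)" and syl: "sylow_subgroup G q Q" for Q
  proof (rule ccontr)
    assume nA: "\<not> centre (G\<lparr>carrier := Q\<rparr>) \<subseteq> centre G"
    define n where "n = multiplicity q (order G)"
    have Q: "subgroup Q G" and cQ: "card Q = q ^ n"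
      using syl unfolding sylow_subgroup_def ppart_def n_def by auto
    have Qcar: "Q \<subseteq> carrier G" using Q subgroup.subset by blast
    have Qfin: "finite Q" using Qcar fin finite_subset by blast
    have mSa: "multiplicity q (card S) = a"
      using eq q1 unfolding ppart_def a_def by (simp add: power_inject_exp)
    define A where "A = centre (G\<lparr>carrier := Q\<rparr>)"
    have A_eq: "A = {z \<in> Q. \<forall>x\<in>Q. z \<otimes> x = x \<otimes> z}" unfolding A_def centre_def by simp
    interpret QG: group "G\<lparr>carrier := Q\<rparr>" using Q subgroup.subgroup_is_group is_group by blast
    have A: "subgroup A G" using subgroup_of_sub[OF Q QG.centre_subgroup] A_def by simp
    have AQ: "A \<subseteq> Q" using A_eq by auto
    have PQ: "P \<subseteq> Q" using centre_p_sub_sylow[OF fin P Pc cP q Q cQ n_def] .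
    have PA: "P \<subseteq> A"
    proof
      fix z assume z: "z \<in> P"
      have "z \<otimes> x = x \<otimes> z" if "x \<in> Q" for x using centreD(1)[of z x] z Pc Qcar that by auto
      then show "z \<in> A" using A_eq z PQ by auto
    qed
    have "card A dvd card Q"
      by (rule card_dvd_closed[OF fin A Qcar]) (use AQ subgroup.m_closed[OF Q] in auto)
    then obtain b where b: "card A = q ^ b" using cQ divides_primepow_nat[OF q] by auto
    have "P \<noteq> A" using nA Pc A_def by auto
    then have "P \<subset> A" using PA by auto
    then have "card P < card A" using psubset_card_mono AQ Qfin finite_subset by metis
    then have "q ^ a < q ^ b" using cP b by simp
    then have "a < b" using q1 power_less_imp_less_exp by blast
    then have "Suc a \<le> b" by simp
    then have dA: "q ^ Suc a dvd card A" using b le_imp_power_dvd by metis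
    define Xs where "Xs = {g \<in> S. \<forall>x\<in>Q. x \<otimes> g = g \<otimes> x}"
    have Xscar: "Xs \<subseteq> carrier G" using Xs_def Scar by auto
    have AX: "y \<otimes> g \<in> Xs" if y: "y \<in> A" and g: "g \<in> Xs" for y g
    proof -
      have yQ: "y \<in> Q" using y AQ by auto
      have yc: "y \<in> carrier G" using yQ Qcar by auto
      have gS: "g \<in> S" and gx: "\<And>x. x \<in> Q \<Longrightarrow> x \<otimes> g = g \<otimes> x" using g Xs_def by auto
      have gc: "g \<in> carrier G" using gS Scar by auto
      have g1: "pi_element G \<pi> g" using gS Schar by auto
      have cm: "x \<otimes> (y \<otimes> g) = (y \<otimes> g) \<otimes> x" if x: "x \<in> Q" for x
      proof (rule comm_mult)
        show "x \<in> carrier G" using x Qcar by auto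
        show "y \<in> carrier G" "g \<in> carrier G" using yc gc by auto
        show "x \<otimes> y = y \<otimes> x" using y x A_eq by auto
        show "x \<otimes> g = g \<otimes> x" using gx x by auto
      qed
      have "pi_element G \<pi> (y \<otimes> g)"
      proof (rule pi_mult[OF q qpi yc g1])
        show "y \<otimes> g = g \<otimes> y" using gx[OF yQ] by simp
        show "y [^] q ^ n = \<one>" using pow_sub[OF fin Q yQ] cQ by simp
      qed
      moreover have "\<not> q dvd card (conj_class G (y \<otimes> g))"
        using centralised_not_dvd[OF fin Q cQ n_def q _ cm] yc gc by auto
      ultimately show ?thesis using Schar Xs_def cm by auto
    qed
    have dX: "q ^ Suc a dvd card Xs"
      using card_dvd_closed[OF fin A Xscar AX] dA dvd_trans by blast
    have PX: "p \<otimes> g \<in> Xs" if p: "p \<in> P" and g: "g \<in> Xs" for p g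
    proof -
      have "p \<otimes> g \<in> S" using PS p g Xs_def by auto
      moreover have "x \<otimes> (p \<otimes> g) = (p \<otimes> g) \<otimes> x" if x: "x \<in> Q" for x
      proof (rule comm_mult)
        show "x \<in> carrier G" using x Qcar by auto
        show "p \<in> carrier G" "g \<in> carrier G" using p Pcar g Xscar by auto
        have "p \<in> centre G" "x \<in> carrier G" using p Pc x Qcar by auto
        then show "x \<otimes> p = p \<otimes> x" using centreD(1)[of p x] by simp
        show "x \<otimes> g = g \<otimes> x" using g x Xs_def by auto
      qed
      ultimately show ?thesis using Xs_def by auto
    qed
    define E where "E = (\<lambda>g. P #> g) ` S"
    define f where "f = (\<lambda>x C. (\<lambda>c. x \<otimes> c \<otimes> inv x) ` C)"
    have fP: "f x (P #> g) = P #> (x \<otimes> g \<otimes> inv x)" if "x \<in> carrier G" "g \<in> carrier G" for x g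
      using conj_rcos_central[OF Pc that] f_def by simp
    have Ecar: "C \<subseteq> carrier G" if "C \<in> E" for C
      using that E_def Scar r_coset_subset_G[OF Pcar] by auto
    let ?N = "{e \<in> E. \<exists>x\<in>carrier (G\<lparr>carrier := Q\<rparr>). f x e \<noteq> e}"
    have dN: "q dvd card ?N"
    proof (rule fixpoint_mod[where R = "G\<lparr>carrier := Q\<rparr>" and k = n])
      show "group (G\<lparr>carrier := Q\<rparr>)" by (rule QG.is_group)
      show "finite (carrier (G\<lparr>carrier := Q\<rparr>))" using Qfin by simp
      show "card (carrier (G\<lparr>carrier := Q\<rparr>)) = q ^ n" using cQ by simp
      show "Factorial_Ring.prime q" by (rule q)
      show "finite E" using Sfin E_def by simp
      show "f x e \<in> E" if x: "x \<in> carrier (G\<lparr>carrier := Q\<rparr>)" and e: "e \<in> E" for x e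
      proof -
        obtain g where g: "g \<in> S" "e = P #> g" using e E_def by auto
        have xc: "x \<in> carrier G" using x Qcar by auto
        have "f x e = P #> (x \<otimes> g \<otimes> inv x)" using fP xc g Scar by auto
        moreover have "x \<otimes> g \<otimes> inv x \<in> S" using S_conj[of g \<pi> q x] g xc S_def by simp
        ultimately show ?thesis using E_def by auto
      qed
      show "f \<one>\<^bsub>G\<lparr>carrier := Q\<rparr>\<^esub> e = e" if e: "e \<in> E" for e
      proof -
        have "f \<one> e = (\<lambda>c. c) ` e" unfolding f_def
          by (rule image_cong[OF refl]) (use Ecar[OF e] in auto)
        then show ?thesis by simp
      qed
      show "f (x \<otimes>\<^bsub>G\<lparr>carrier := Q\<rparr>\<^esub> y) e = f x (f y e)"
        if x: "x \<in> carrier (G\<lparr>carrier := Q\<rparr>)" and y: "y \<in> carrier (G\<lparr>carrier := Q\<rparr>)" and e: "e \<in> E" for x y e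
      proof -
        have xc: "x \<in> carrier G" and yc: "y \<in> carrier G" using x y Qcar by auto
        have "f x (f y e) = (\<lambda>c. x \<otimes> (y \<otimes> c \<otimes> inv y) \<otimes> inv x) ` e" unfolding f_def image_image by simp
        also have "... = (\<lambda>c. (x \<otimes> y) \<otimes> c \<otimes> inv (x \<otimes> y)) ` e"
          by (rule image_cong[OF refl]) (use conj_conj xc yc Ecar[OF e] in auto)
        finally show ?thesis unfolding f_def by simp
      qed
    qed
    have NE: "?N \<subseteq> E" by auto
    have fixeq: "E - ?N = (\<lambda>g. P #> g) ` Xs"
    proof
      show "E - ?N \<subseteq> (\<lambda>g. P #> g) ` Xs"
      proof
        fix C assume C: "C \<in> E - ?N"
        then obtain g where g: "g \<in> S" "C = P #> g" using E_def by auto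
        have gc: "g \<in> carrier G" using g Scar by auto
        have fixC: "f x C = C" if "x \<in> Q" for x using C that by auto
        have "x \<otimes> g = g \<otimes> x" if x: "x \<in> Q" for x
        proof -
          have xc: "x \<in> carrier G" using x Qcar by auto
          define h where "h = x \<otimes> g \<otimes> inv x"
          have hc: "h \<in> carrier G" using h_def xc gc by simp
          have "P #> h = P #> g" using fixC[OF x] fP[OF xc gc] g h_def by simp
          then have "h \<in> P #> g" using rcos_self[OF hc P] by simp
          then have p: "h \<otimes> inv g \<in> P" using subgroup.rcos_module_imp[OF P is_group gc] by blast
          have "(h \<otimes> inv g) \<otimes> g = h" using hc gc by (simp add: m_assoc)
          moreover have "h \<in> conj_class G g" using xc h_def unfolding conj_class_def by blast
          ultimately have "(h \<otimes> inv g) \<otimes> g \<in> conj_class G g" by simp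
          moreover have nd: "\<not> q dvd card (conj_class G g)" using g(1) Schar by blast
          ultimately have "h \<otimes> inv g = \<one>"
            using free_centre[OF fin P Pc cP q gc nd p] by blast
          then have "h = g" using mult_inv_one hc gc by blast
          then have "x \<otimes> g \<otimes> inv x = g" using h_def by simp
          then show ?thesis using conj_comm[OF xc gc] by blast
        qed
        then have "g \<in> Xs" using Xs_def g by auto
        then show "C \<in> (\<lambda>g. P #> g) ` Xs" using g by auto
      qed
      show "(\<lambda>g. P #> g) ` Xs \<subseteq> E - ?N"
      proof
        fix C assume "C \<in> (\<lambda>g. P #> g) ` Xs"
        then obtain g where g: "g \<in> Xs" "C = P #> g" by auto
        have gc: "g \<in> carrier G" using g Xscar by auto
        have "C \<in> E" using g E_def Xs_def by auto
        moreover have "f x C = C" if x: "x \<in> Q" for x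
        proof -
          have xc: "x \<in> carrier G" using x Qcar by auto
          have "x \<otimes> g \<otimes> inv x = g" using comm_conj[OF xc gc] g x Xs_def by auto
          then show ?thesis using fP[OF xc gc] g by simp
        qed
        ultimately show "C \<in> E - ?N" by auto
      qed
    qed
    have cS: "card P * card E = card S" unfolding E_def using card_union_rcosets[OF fin P Scar PS] .
    have cX: "card P * card ((\<lambda>g. P #> g) ` Xs) = card Xs" using card_union_rcosets[OF fin P Xscar PX] .
    have Efin: "finite E" using Sfin E_def by simp
    have "card (E - ?N) = card E - card ?N" using card_Diff_subset[OF finite_subset[OF NE Efin] NE] .
    moreover have "card ?N \<le> card E" using card_mono[OF Efin NE] .
    ultimately have cE: "card E = card ?N + card (E - ?N)" by simp
    have "card S = card P * card E" using cS by simp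
    also have "... = card P * card ?N + card P * card (E - ?N)" using cE by (simp add: add_mult_distrib2)
    also have "card P * card (E - ?N) = card Xs" using cX fixeq by simp
    finally have "card S = q ^ a * card ?N + card Xs" using cP by simp
    moreover have "q ^ Suc a dvd q ^ a * card ?N" using dN by (simp add: mult_dvd_mono)
    ultimately have "q ^ Suc a dvd card S" using dX by simp
    then have "Suc a \<le> multiplicity q (card S)" using multiplicity_geI[OF Sne qnu] by blast
    then show False using mSa by simp
  qed
  show ?thesis using part1 part2 unfolding S_def Zc_def by blast
qed


theorem theoremC:
  fixes G :: "('a, 'b) monoid_scheme" and \<pi> :: "nat set" and q :: nat
  assumes "group G" and "finite (carrier G)"
    and "\<forall>p \<in> \<pi>. Factorial_Ring.prime p" and "q \<in> \<pi>"
  shows "ppart q (card (centre G)) dvd ppart q (card (S_qprime G \<pi> q)) \<and>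
         (ppart q (card (centre G)) = ppart q (card (S_qprime G \<pi> q)) \<longrightarrow>
         (\<forall>Q. sylow_subgroup G q Q \<longrightarrow> centre (G\<lparr>carrier := Q\<rparr>) \<subseteq> centre G))"
  using group.main_result[OF assms(1) assms(2-4)] .

end
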